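(* Let $Q_k^A,Q_k^B$ be the SDQ iterates, $Q_k^{\mathrm{err}}=Q_k^A-Q_k^B$, and $w_k^A,w_k^B$ the associated noise vectors (see context). Define \[ Q_{k+1}^{\mathrm{err}_U}=(I+\alpha\gamma DP\Pi_{Q_k^{\mathrm{err}_U}}-\alpha D)Q_k^{\mathrm{err}_U}+\alpha w_k^A-\alpha w_k^B, \] with initial vector $Q_0^{\mathrm{err}_U}\in\mathbb{R}^{|\mathcal{S}||\mathcal{A}|}$. If $Q_0^{\mathrm{err}_U}\ge Q_0^{\mathrm{err}}$ element-wise, then $Q_k^{\mathrm{err}_U}\ge Q_k^{\mathrm{err}}$ element-wise for all $k\ge0$.
   Context: Finite MDP with states $\mathcal{S}=\{1,\dots,|\mathcal{S}|\}$, actions $\mathcal{A}=\{1,\dots,|\mathcal{A}|\}$, transitions $P(s'|s,a)$, bounded deterministic reward $r(s,a,s')$, discount $\gamma\in(0,1)$. Sampling distribution $d(s,a)>0$ on $\mathcal{S}\times\mathcal{A}$; at iteration $k$, $(s_k,a_k)\sim d$ i.i.d., $s_k'\sim P(\cdot|s_k,a_k)$, $r_{k+1}=r(s_k,a_k,s_k')$. Constant step-size $\alpha\in(0,1)$. SDQ: only entry $(s_k,a_k)$ is updated, $Q_{k+1}^A(s_k,a_k)=Q_k^A(s_k,a_k)+\alpha\{r_{k+1}+\gamma Q_k^A(s_k',\arg\max_aQ_k^B(s_k',a))-Q_k^A(s_k,a_k)\}$ and symmetrically for $B$ with roles of $A,B$ swapped. Vector notation: $Q\in\mathbb{R}^{|\mathcal{S}||\mathcal{A}|}$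 stacks $Q(\cdot,1),\dots,Q(\cdot,|\mathcal{A}|)$, so $Q(s,a)=(e_a\otimes e_s)^TQ$. $D$ is the diagonal matrix with entry $d(s,a)$ at position $(s,a)$. $P\in\mathbb{R}^{|\mathcal{S}||\mathcal{A}|\times|\mathcal{S}|}$ has row $(s,a)$ equal to $P(\cdot|s,a)$. $R(s,a)=\mathbb{E}[r(s,a,s')|s,a]$. For $Q$, $\pi_Q(s)=\arg\max_aQ(s,a)$ (fixed tie-breaking) and $\Pi_Q\in\mathbb{R}^{|\mathcal{S}|\times|\mathcal{S}||\mathcal{A}|}$ has $s$-th row $e_{\pi_Q(s)}^T\otimes e_s^T$. Noise: $w_k^A=(e_{a_k}\otimes e_{s_k})r_{k+1}+\gamma(e_{a_k}\otimes e_{s_k})e_{s_k'}^T\Pi_{Q_k^B}Q_k^A-(e_{a_k}\otimes e_{s_k})(e_{a_k}\otimes e_{s_k})^TQ_k^A-(DR+\gamma DP\Pi_{Q_k^B}Q_k^A-DQ_k^A)$, and $w_k^B$ is the same with $A$ and $B$ swapped. *)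

theory Defs
  imports "HOL-Analysis.Analysis"
begin

text \<open>States form the finite type 's, actions the finite
  type 'a; Q-vectors live in real^('s \<times> 'a), indexed by the pair (s,a), so the
  vector e_a \<otimes> e_s of the paper is axis (s,a) 1.\<close>

definition Dmat :: "('s::finite \<times> 'a::finite \<Rightarrow> real) \<Rightarrow> real^('s \<times> 'a)^('s \<times> 'a)" where
  "Dmat d = (\<chi> i j. if i = j then d i else 0)"

definition Pmat :: "('s::finite \<times> 'a::finite \<Rightarrow> 's \<Rightarrow> real) \<Rightarrow> real^'s^('s \<times> 'a)" where
  "Pmat P = (\<chi> i s'. P i s')"

text \<open>Row s of Pi_Q is e_{pi_Q(s)}^T \<otimes> e_s^T; pol is the greedy policy with a fixed
  tie-breaking rule.\<close>
definition PiMat :: "(real^('s::finite \<times> 'a::finite) \<Rightarrow> 's \<Rightarrow> 'a) \<Rightarrow> real^('s \<times> 'a) \<Rightarrow> real^('s \<times> 'a)^'s" where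
  "PiMat pol Q = (\<chi> s j. if j = (s, pol Q s) then 1 else 0)"

definition is_greedy :: "(real^('s::finite \<times> 'a::finite) \<Rightarrow> 's \<Rightarrow> 'a) \<Rightarrow> bool" where
  "is_greedy pol \<longleftrightarrow> (\<forall>Q s b. Q $ (s, b) \<le> Q $ (s, pol Q s))"

definition Rvec :: "('s::finite \<times> 'a::finite \<Rightarrow> 's \<Rightarrow> real) \<Rightarrow> ('s \<Rightarrow> 'a \<Rightarrow> 's \<Rightarrow> real) \<Rightarrow> real^('s \<times> 'a)" where
  "Rvec P r = (\<chi> i. \<Sum>s'\<in>UNIV. P i s' * r (fst i) (snd i) s')"

text \<open>SDQ iterates along a sample path (s_k, a_k, s'_k): only entry (s_k,a_k) of both
  estimates is updated, using the values at iteration k.\<close>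
fun sdq :: "real \<Rightarrow> real \<Rightarrow> ('s::finite \<Rightarrow> 'a::finite \<Rightarrow> 's \<Rightarrow> real) \<Rightarrow> (real^('s \<times> 'a) \<Rightarrow> 's \<Rightarrow> 'a)
    \<Rightarrow> (nat \<Rightarrow> 's) \<Rightarrow> (nat \<Rightarrow> 'a) \<Rightarrow> (nat \<Rightarrow> 's)
    \<Rightarrow> real^('s \<times> 'a) \<Rightarrow> real^('s \<times> 'a) \<Rightarrow> nat \<Rightarrow> (real^('s \<times> 'a)) \<times> (real^('s \<times> 'a))" where
  "sdq \<alpha> \<gamma> r pol s a s' QA0 QB0 0 = (QA0, QB0)"
| "sdq \<alpha> \<gamma> r pol s a s' QA0 QB0 (Suc k) =
     (let QA = fst (sdq \<alpha> \<gamma> r pol s a s' QA0 QB0 k);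
          QB = snd (sdq \<alpha> \<gamma> r pol s a s' QA0 QB0 k);
          i = (s k, a k);
          rr = r (s k) (a k) (s' k)
      in ((\<chi> j. if j = i then QA $ i + \<alpha> * (rr + \<gamma> * QA $ (s' k, pol QB (s' k)) - QA $ i) else QA $ j),
          (\<chi> j. if j = i then QB $ i + \<alpha> * (rr + \<gamma> * QB $ (s' k, pol QA (s' k)) - QB $ i) else QB $ j)))"

text \<open>Noise vector w^A for current estimates QA (updated) and QB (used for the greedy
  action); w^B is the same with the roles swapped. Here
  (e_a \<otimes> e_s) e_{s'}^T \<Pi>_{QB} QA = ((\<Pi>_{QB} QA) at s') (e_a \<otimes> e_s) and
  (e_a \<otimes> e_s)(e_a \<otimes> e_s)^T QA = QA(s,a) (e_a \<otimes> e_s).\<close>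
definition noise :: "real \<Rightarrow> ('s::finite \<times> 'a::finite \<Rightarrow> real) \<Rightarrow> ('s \<times> 'a \<Rightarrow> 's \<Rightarrow> real) \<Rightarrow> ('s \<Rightarrow> 'a \<Rightarrow> 's \<Rightarrow> real)
    \<Rightarrow> (real^('s \<times> 'a) \<Rightarrow> 's \<Rightarrow> 'a) \<Rightarrow> 's \<Rightarrow> 'a \<Rightarrow> 's
    \<Rightarrow> real^('s \<times> 'a) \<Rightarrow> real^('s \<times> 'a) \<Rightarrow> real^('s \<times> 'a)" where
  "noise \<gamma> d P r pol sk ak sk' QA QB =
     (let e = (axis (sk, ak) 1 :: real^('s \<times> 'a))
      in r sk ak sk' *s e
         + (\<gamma> * (PiMat pol QB *v QA) $ sk') *s e
         - (QA $ (sk, ak)) *s e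
         - (Dmat d *v Rvec P r + \<gamma> *s ((Dmat d ** Pmat P ** PiMat pol QB) *v QA) - Dmat d *v QA))"

definition wA where
  "wA \<alpha> \<gamma> d P r pol s a s' QA0 QB0 k =
     noise \<gamma> d P r pol (s k) (a k) (s' k)
       (fst (sdq \<alpha> \<gamma> r pol s a s' QA0 QB0 k)) (snd (sdq \<alpha> \<gamma> r pol s a s' QA0 QB0 k))"

definition wB where
  "wB \<alpha> \<gamma> d P r pol s a s' QA0 QB0 k =
     noise \<gamma> d P r pol (s k) (a k) (s' k)
       (snd (sdq \<alpha> \<gamma> r pol s a s' QA0 QB0 k)) (fst (sdq \<alpha> \<gamma> r pol s a s' QA0 QB0 k))"

fun QerrU where
  "QerrU \<alpha> \<gamma> d P r pol s a s' QA0 QB0 QU0 0 = QU0"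
| "QerrU \<alpha> \<gamma> d P r pol s a s' QA0 QB0 QU0 (Suc k) =
     (let QU = QerrU \<alpha> \<gamma> d P r pol s a s' QA0 QB0 QU0 k
      in (mat 1 + (\<alpha> * \<gamma>) *\<^sub>R (Dmat d ** Pmat P ** PiMat pol QU) - \<alpha> *\<^sub>R Dmat d) *v QU
         + \<alpha> *s wA \<alpha> \<gamma> d P r pol s a s' QA0 QB0 k
         - \<alpha> *s wB \<alpha> \<gamma> d P r pol s a s' QA0 QB0 k)"

end

theory Submission
  imports Defs
begin

lemma Pi_v: "(PiMat pol Q *v V) $ s = V $ (s, pol Q s)"
proof -
  have "(PiMat pol Q *v V) $ s = (\<Sum>j\<in>UNIV. if j = (s, pol Q s) then V $ j else 0)"
    unfolding PiMat_def matrix_vector_mult_def by (simp only: vec_lambda_beta) (intro sum.cong, auto)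
  then show ?thesis by simp
qed
lemma D_v: "(Dmat d *v V) $ j = d j * V $ j"
proof -
  have "(Dmat d *v V) $ j = (\<Sum>i\<in>UNIV. if j = i then d i * V $ i else 0)"
    unfolding Dmat_def matrix_vector_mult_def by (simp only: vec_lambda_beta) (intro sum.cong, auto)
  then show ?thesis by simp
qed
lemma sc_v: "((c *\<^sub>R M) *v V) $ j = c * (M *v V) $ j"
  by (simp add: matrix_vector_mult_def sum_distrib_left mult.assoc)
lemma P_v: "(Pmat P *v V) $ j = (\<Sum>s1\<in>UNIV. P j s1 * V $ s1)"
  unfolding Pmat_def matrix_vector_mult_def by simp
lemma DPPi_v: "((Dmat d ** Pmat P ** PiMat pol Q) *v V) $ j = d j * (\<Sum>s1\<in>UNIV. P j s1 * V $ (s1, pol Q s1))"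
  by (simp add: matrix_vector_mul_assoc[symmetric] D_v P_v Pi_v)
lemma big_v: "((mat 1 + c *\<^sub>R M - b *\<^sub>R N) *v V) $ j = V $ j + c * (M *v V) $ j - b * (N *v V) $ j"
  by (simp add: matrix_vector_mult_add_rdistrib matrix_vector_mult_diff_rdistrib sc_v)

lemma noise_c: "noise \<gamma> d P r pol sk ak x QA QB $ j =
   (if j = (sk, ak) then r sk ak x + \<gamma> * QA $ (x, pol QB x) - QA $ (sk, ak) else 0)
   - (d j * Rvec P r $ j + \<gamma> * (d j * (\<Sum>s1\<in>UNIV. P j s1 * QA $ (s1, pol QB s1))) - d j * QA $ j)"
  unfolding noise_def Let_def
  by (simp add: DPPi_v D_v Pi_v axis_def)

lemma sum_diff3: "(\<Sum>s1\<in>UNIV. P j s1 * (u s1 - (x s1 - y s1))) =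
   (\<Sum>s1\<in>UNIV. P j s1 * u s1) - ((\<Sum>s1\<in>UNIV. P j s1 * x s1) - (\<Sum>s1\<in>UNIV. P j s1 * (y s1::real)))"
  by (simp add: right_diff_distrib sum_subtractf)

theorem proposition3:
  fixes P :: "'s::finite \<times> 'a::finite \<Rightarrow> 's \<Rightarrow> real"
    and d :: "'s \<times> 'a \<Rightarrow> real"
    and r :: "'s \<Rightarrow> 'a \<Rightarrow> 's \<Rightarrow> real"
    and pol :: "real^('s \<times> 'a) \<Rightarrow> 's \<Rightarrow> 'a"
    and \<alpha> \<gamma> :: real
    and s :: "nat \<Rightarrow> 's" and a :: "nat \<Rightarrow> 'a" and s' :: "nat \<Rightarrow> 's"
    and QA0 QB0 QU0 :: "real^('s \<times> 'a)"
  assumes P_nonneg: "\<forall>i s1. 0 \<le> P i s1"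
    and P_sum: "\<forall>i. (\<Sum>s1\<in>UNIV. P i s1) = 1"
    and d_pos: "\<forall>i. 0 < d i"
    and d_sum: "(\<Sum>i\<in>UNIV. d i) = 1"
    and gamma: "0 < \<gamma>" "\<gamma> < 1"
    and alpha: "0 < \<alpha>" "\<alpha> < 1"
    and greedy: "is_greedy pol"
    and init: "\<forall>i. QU0 $ i \<ge> (QA0 - QB0) $ i"
  shows "\<forall>k i. QerrU \<alpha> \<gamma> d P r pol s a s' QA0 QB0 QU0 k $ i
           \<ge> (fst (sdq \<alpha> \<gamma> r pol s a s' QA0 QB0 k) - snd (sdq \<alpha> \<gamma> r pol s a s' QA0 QB0 k)) $ i"
proof (rule allI)
  fix k
  show "\<forall>i. QerrU \<alpha> \<gamma> d P r pol s a s' QA0 QB0 QU0 k $ i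
           \<ge> (fst (sdq \<alpha> \<gamma> r pol s a s' QA0 QB0 k) - snd (sdq \<alpha> \<gamma> r pol s a s' QA0 QB0 k)) $ i"
  proof (induction k)
    case 0
    then show ?case using init by simp
  next
    case (Suc k)
    define U where "U = QerrU \<alpha> \<gamma> d P r pol s a s' QA0 QB0 QU0 k"
    define QA where "QA = fst (sdq \<alpha> \<gamma> r pol s a s' QA0 QB0 k)"
    define QB where "QB = snd (sdq \<alpha> \<gamma> r pol s a s' QA0 QB0 k)"
    define i0 where "i0 = (s k, a k)"
    define x where "x = s' k"
    have IH: "\<And>i. QA $ i - QB $ i \<le> U $ i" using Suc.IH unfolding U_def QA_def QB_def by (metis vector_minus_component)
    have key: "\<And>s1. QA $ (s1, pol QB s1) - QB $ (s1, pol QA s1) \<le> U $ (s1, pol U s1)"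
    proof -
      fix s1
      have "QA $ (s1, pol QB s1) \<le> QA $ (s1, pol QA s1)" using greedy unfolding is_greedy_def by blast
      moreover have "U $ (s1, pol QA s1) \<le> U $ (s1, pol U s1)" using greedy unfolding is_greedy_def by blast
      ultimately show "QA $ (s1, pol QB s1) - QB $ (s1, pol QA s1) \<le> U $ (s1, pol U s1)"
        using IH[of "(s1, pol QA s1)"] by linarith
    qed
    show ?case
    proof
      fix j
      define SU where "SU = (\<Sum>s1\<in>UNIV. P j s1 * U $ (s1, pol U s1))"
      define SA where "SA = (\<Sum>s1\<in>UNIV. P j s1 * QA $ (s1, pol QB s1))"
      define SB where "SB = (\<Sum>s1\<in>UNIV. P j s1 * QB $ (s1, pol QA s1))"
      have T: "0 \<le> SU - (SA - SB)"
      proof -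
        have "0 \<le> (\<Sum>s1\<in>UNIV. P j s1 * (U $ (s1, pol U s1) - (QA $ (s1, pol QB s1) - QB $ (s1, pol QA s1))))"
          by (intro sum_nonneg mult_nonneg_nonneg) (auto simp: key P_nonneg[rule_format] simp del: split_paired_All)
        then show ?thesis unfolding SU_def SA_def SB_def by (simp add: right_diff_distrib sum_subtractf)
      qed
      have dj1: "d j \<le> 1"
      proof -
        have "d j = (\<Sum>i\<in>{j}. d i)" by simp
        also have "\<dots> \<le> (\<Sum>i\<in>UNIV. d i)" using d_pos by (intro sum_mono2) (auto intro: less_imp_le)
        finally show ?thesis using d_sum by simp
      qed
      have c1: "0 \<le> 1 - \<alpha> * d j"
        using dj1 alpha d_pos[rule_format, of j] mult_le_one[of \<alpha> "d j"] by linarith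
      have hU: "QerrU \<alpha> \<gamma> d P r pol s a s' QA0 QB0 QU0 (Suc k) $ j =
         U $ j + \<alpha> * \<gamma> * (d j * SU) - \<alpha> * (d j * U $ j)
         + \<alpha> * ((if j = i0 then r (s k) (a k) x + \<gamma> * QA $ (x, pol QB x) - QA $ i0 else 0)
             - (d j * Rvec P r $ j + \<gamma> * (d j * SA) - d j * QA $ j))
         - \<alpha> * ((if j = i0 then r (s k) (a k) x + \<gamma> * QB $ (x, pol QA x) - QB $ i0 else 0)
             - (d j * Rvec P r $ j + \<gamma> * (d j * SB) - d j * QB $ j))"
        unfolding QerrU.simps Let_def U_def[symmetric] wA_def wB_def QA_def[symmetric] QB_def[symmetric]
        by (simp add: big_v DPPi_v D_v noise_c SU_def SA_def SB_def i0_def x_def)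
      have hE: "(fst (sdq \<alpha> \<gamma> r pol s a s' QA0 QB0 (Suc k)) - snd (sdq \<alpha> \<gamma> r pol s a s' QA0 QB0 (Suc k))) $ j
         = (if j = i0 then (QA $ i0 + \<alpha> * (r (s k) (a k) x + \<gamma> * QA $ (x, pol QB x) - QA $ i0))
              - (QB $ i0 + \<alpha> * (r (s k) (a k) x + \<gamma> * QB $ (x, pol QA x) - QB $ i0))
            else QA $ j - QB $ j)"
        unfolding sdq.simps Let_def QA_def[symmetric] QB_def[symmetric] i0_def[symmetric] x_def[symmetric]
        by simp
      have diff: "QerrU \<alpha> \<gamma> d P r pol s a s' QA0 QB0 QU0 (Suc k) $ j
         - (fst (sdq \<alpha> \<gamma> r pol s a s' QA0 QB0 (Suc k)) - snd (sdq \<alpha> \<gamma> r pol s a s' QA0 QB0 (Suc k))) $ j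
         = (1 - \<alpha> * d j) * (U $ j - (QA $ j - QB $ j)) + \<alpha> * \<gamma> * d j * (SU - (SA - SB))"
        unfolding hU hE by (cases "j = i0") (simp_all add: algebra_simps)
      have "0 \<le> (1 - \<alpha> * d j) * (U $ j - (QA $ j - QB $ j)) + \<alpha> * \<gamma> * d j * (SU - (SA - SB))"
        using c1 IH[of j] T alpha gamma d_pos[rule_format, of j] by (intro add_nonneg_nonneg mult_nonneg_nonneg) (auto intro: less_imp_le)
      then show "(fst (sdq \<alpha> \<gamma> r pol s a s' QA0 QB0 (Suc k)) - snd (sdq \<alpha> \<gamma> r pol s a s' QA0 QB0 (Suc k))) $ j
         \<le> QerrU \<alpha> \<gamma> d P r pol s a s' QA0 QB0 QU0 (Suc k) $ j"
        using diff by linarith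
    qed
  qed
qed

end
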